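(* Let $\ell,\tilde\ell\in\mathcal{D}^-[0,\infty)$ and $r,\tilde r\in\mathcal{D}^+[0,\infty)$ with $\tilde\ell\le\ell$, $r=\tilde r$ and $\inf_{t\ge0}(r(t)-\ell(t))>0$. Given $\psi\in\mathcal{D}[0,\infty)$, let $(\eta_\ell,\eta_r)$ and $(\eta_{\tilde\ell},\eta_{\tilde r})$ be the constraining processes associated with the SP for $\psi$ on $[\ell(\cdot),r(\cdot)]$ and on $[\tilde\ell(\cdot),\tilde r(\cdot)]$, respectively. Then for every $t\ge0$, $\eta_r(t)\ge\eta_{\tilde r}(t)$ and $\eta_\ell(t)\ge\eta_{\tilde\ell}(t)$.
   Context: $\mathcal{D}[0,\infty)$ denotes the càdlàg functions $[0,\infty)\to(-\infty,\infty)$; $\mathcal{D}^-[0,\infty)$ (resp. $\mathcal{D}^+[0,\infty)$) denotes càdlàg functions with values in $[-\infty,\infty)$ (resp. $(-\infty,\infty]$). SP: $(\phi,\eta)\in\mathcal{D}[0,\infty)^2$ solves the SP on $[\ell(\cdot),r(\cdot)]$ for $\psi$ if (1) $\phi(t)=\psi(t)+\eta(t)\in[\ell(t),r(t)]$ for all $t\ge0$; (2) $\eta=\eta_\ell-\eta_r$ with $\eta_\ell,\eta_r$ non-decreasing and $\int_0^\infty \mathbb{I}_{\{\phi(s)>\ell(s)\}}\,d\eta_\ell(s)=0$, $\int_0^\infty \mathbb{I}_{\{\phi(s)<r(s)\}}\,d\eta_r(s)=0$. The pair $(\eta_\ell,\eta_r)$ is called the pair of constraining processes associated with the SP. When $\inf_t(r(t)-\ell(t))>0$,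 the SP has a unique solution for every $\psi\in\mathcal{D}[0,\infty)$. *)

theory Defs
  imports "HOL-Analysis.Analysis"
begin

definition cadlag :: "(real \<Rightarrow> 'a::topological_space) \<Rightarrow> bool" where
  "cadlag f \<longleftrightarrow> (\<forall>t\<ge>0. (f \<longlongrightarrow> f t) (at_right t)) \<and>
                 (\<forall>t>0. \<exists>L. (f \<longlongrightarrow> L) (at_left t))"

definition cadlag_minus :: "(real \<Rightarrow> ereal) \<Rightarrow> bool" where
  "cadlag_minus f \<longleftrightarrow> cadlag f \<and> (\<forall>t\<ge>0. f t \<noteq> \<infinity>)"

definition cadlag_plus :: "(real \<Rightarrow> ereal) \<Rightarrow> bool" where
  "cadlag_plus f \<longleftrightarrow> cadlag f \<and> (\<forall>t\<ge>0. f t \<noteq> -\<infinity>)"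

text \<open>Non-decreasing cadlag function on [0,infinity) with the convention f(0-) = 0,
  i.e. f 0 \<ge> 0.\<close>
definition nondecr :: "(real \<Rightarrow> real) \<Rightarrow> bool" where
  "nondecr f \<longleftrightarrow> cadlag f \<and> 0 \<le> f 0 \<and> (\<forall>s t. 0 \<le> s \<longrightarrow> s \<le> t \<longrightarrow> f s \<le> f t)"

text \<open>Lebesgue--Stieltjes measure d f of a non-decreasing f on [0,infinity), with
  f(0-) = 0 (so an atom of mass f 0 sits at 0).\<close>
definition LS_measure :: "(real \<Rightarrow> real) \<Rightarrow> real measure" where
  "LS_measure f = interval_measure (\<lambda>x. if x < 0 then 0 else f x)"

definition LS_indicator_integral :: "(real \<Rightarrow> real) \<Rightarrow> (real \<Rightarrow> bool) \<Rightarrow> ennreal" where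
  "LS_indicator_integral f P =
     (\<integral>\<^sup>+ s. indicator {s. 0 \<le> s \<and> P s} s \<partial>LS_measure f)"

definition SP_solution ::
  "(real \<Rightarrow> real) \<Rightarrow> (real \<Rightarrow> ereal) \<Rightarrow> (real \<Rightarrow> ereal) \<Rightarrow>
   (real \<Rightarrow> real) \<Rightarrow> (real \<Rightarrow> real) \<Rightarrow> bool" where
  "SP_solution \<psi> l r \<phi> \<eta> \<longleftrightarrow>
     cadlag \<phi> \<and> cadlag \<eta> \<and>
     (\<forall>t\<ge>0. \<phi> t = \<psi> t + \<eta> t \<and> l t \<le> ereal (\<phi> t) \<and> ereal (\<phi> t) \<le> r t) \<and>
     (\<exists>\<eta>l \<eta>r. nondecr \<eta>l \<and> nondecr \<eta>r \<and> (\<forall>t\<ge>0. \<eta> t = \<eta>l t - \<eta>r t) \<and>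
        LS_indicator_integral \<eta>l (\<lambda>s. ereal (\<phi> s) > l s) = 0 \<and>
        LS_indicator_integral \<eta>r (\<lambda>s. ereal (\<phi> s) < r s) = 0)"

definition constraining_pair ::
  "(real \<Rightarrow> real) \<Rightarrow> (real \<Rightarrow> ereal) \<Rightarrow> (real \<Rightarrow> ereal) \<Rightarrow>
   (real \<Rightarrow> real) \<Rightarrow> (real \<Rightarrow> real) \<Rightarrow> bool" where
  "constraining_pair \<psi> l r \<eta>l \<eta>r \<longleftrightarrow>
     (\<exists>\<phi> \<eta>. cadlag \<phi> \<and> cadlag \<eta> \<and>
        (\<forall>t\<ge>0. \<phi> t = \<psi> t + \<eta> t \<and> l t \<le> ereal (\<phi> t) \<and> ereal (\<phi> t) \<le> r t) \<and>
        nondecr \<eta>l \<and> nondecr \<eta>r \<and> (\<forall>t\<ge>0. \<eta> t = \<eta>l t - \<eta>r t) \<and>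
        LS_indicator_integral \<eta>l (\<lambda>s. ereal (\<phi> s) > l s) = 0 \<and>
        LS_indicator_integral \<eta>r (\<lambda>s. ereal (\<phi> s) < r s) = 0)"

end

theory Submission
  imports Defs
begin

definition ext :: "(real \<Rightarrow> real) \<Rightarrow> real \<Rightarrow> real" where
  "ext f x = (if x < 0 then 0 else f x)"

lemma ext_mono:
  assumes "nondecr f" "x \<le> y" shows "ext f x \<le> ext f y"
  using assms unfolding nondecr_def ext_def by (auto intro: order_trans[of 0 "f 0"])

lemma ext_rcont:
  assumes "nondecr f" shows "continuous (at_right a) (ext f)"
proof (cases "a < 0")
  case True
  have ev: "eventually (\<lambda>x. ext f x = ext f a) (at_right a)"
  proof -
    have "eventually (\<lambda>x. x < 0) (at_right a)"
      using True unfolding eventually_at_right_field by (intro exI[of _ 0]) auto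
    then show ?thesis by eventually_elim (use True in \<open>auto simp: ext_def\<close>)
  qed
  show ?thesis unfolding continuous_within
    by (rule tendsto_eventually) (use ev in auto)
next
  case False
  have "(f \<longlongrightarrow> f a) (at_right a)" using assms False unfolding nondecr_def cadlag_def by auto
  moreover have "eventually (\<lambda>x. f x = ext f x) (at_right a)"
  proof -
    have "eventually (\<lambda>x. a < x) (at_right a)" by (rule eventually_at_right_less)
    then show ?thesis by eventually_elim (use False in \<open>auto simp: ext_def\<close>)
  qed
  ultimately have "(ext f \<longlongrightarrow> f a) (at_right a)" by (rule tendsto_cong[THEN iffD1, rotated])
  then show ?thesis using False unfolding continuous_within by (simp add: ext_def)
qed

lemma LS_Ioc:
  assumes "nondecr f" "a \<le> b"
  shows "emeasure (LS_measure f) {a<..b} = ennreal (ext f b - ext f a)"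
proof -
  have e: "(\<lambda>x. if x < 0 then 0 else f x) = ext f" by (auto simp: ext_def)
  show ?thesis unfolding LS_measure_def e
    by (rule emeasure_interval_measure_Ioc) (use assms ext_mono ext_rcont in auto)
qed

lemma LS_zero:
  assumes "LS_indicator_integral f P = 0" "A \<in> sets borel" "A \<subseteq> {s. 0 \<le> s \<and> P s}"
  shows "emeasure (LS_measure f) A = 0"
proof -
  have "emeasure (LS_measure f) A = (\<integral>\<^sup>+ s. indicator A s \<partial>LS_measure f)"
    using assms(2) by (simp add: LS_measure_def)
  also have "\<dots> \<le> (\<integral>\<^sup>+ s. indicator {s. 0 \<le> s \<and> P s} s \<partial>LS_measure f)"
    by (rule nn_integral_mono) (use assms(3) in \<open>auto simp: indicator_def\<close>)
  also have "\<dots> = 0" using assms(1) unfolding LS_indicator_integral_def .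
  finally show ?thesis by simp
qed

lemma LS_const:
  assumes "nondecr f" "0 \<le> a" "a \<le> b" "LS_indicator_integral f P = 0" "\<forall>s. a < s \<and> s \<le> b \<longrightarrow> P s"
  shows "f b \<le> f a"
proof -
  have "emeasure (LS_measure f) {a<..b} = 0"
    by (rule LS_zero[OF assms(4)]) (use assms in auto)
  then have "ext f b - ext f a \<le> 0" using LS_Ioc[OF assms(1,3)] by (simp add: ennreal_eq_0_iff)
  then show ?thesis using assms(2,3) by (simp add: ext_def)
qed

lemma LS_atom:
  assumes "nondecr f" "emeasure (LS_measure f) {x} = 0" "e > 0"
  shows "\<exists>z<x. ext f x - ext f z < e"
proof -
  define A where "A n = {x - 1/Suc n<..x}" for n :: nat
  have fin: "emeasure (LS_measure f) (A n) \<noteq> \<infinity>" for n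
    unfolding A_def by (subst LS_Ioc[OF assms(1)]) auto
  have dec: "decseq A"
    unfolding A_def decseq_def
  proof (intro allI impI subsetI)
    fix m n :: nat and y assume "m \<le> n" "y \<in> {x - 1 / real (Suc n)<..x}"
    moreover have "1 / real (Suc n) \<le> 1 / real (Suc m)" using \<open>m \<le> n\<close> by (simp add: frac_le)
    ultimately show "y \<in> {x - 1 / real (Suc m)<..x}" by auto
  qed
  have int: "(\<Inter>n. A n) = {x}"
  proof (intro set_eqI iffI)
    fix y assume "y \<in> (\<Inter>n. A n)"
    then have h: "\<And>n. x - 1 / real (Suc n) < y \<and> y \<le> x" by (auto simp: A_def)
    show "y \<in> {x}"
    proof (rule ccontr)
      assume "y \<notin> {x}" with h[of 0] have "x - y > 0" by force
      then obtain n where n0: "0 < n" "inverse (real n) < x - y" using ex_inverse_of_nat_less by blast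
      have "inverse (real (Suc n)) \<le> inverse (real n)" using n0 by (simp add: field_simps)
      with n0 h[of n] show False by (simp add: field_simps)
    qed
  qed (auto simp: A_def)
  have "(\<lambda>n. emeasure (LS_measure f) (A n)) \<longlonglongrightarrow> emeasure (LS_measure f) (\<Inter>n. A n)"
    by (rule Lim_emeasure_decseq) (use fin dec in \<open>auto simp: A_def[abs_def] LS_measure_def\<close>)
  then have "(\<lambda>n. emeasure (LS_measure f) (A n)) \<longlonglongrightarrow> 0" using int assms(2) by simp
  then have "eventually (\<lambda>n. emeasure (LS_measure f) (A n) < ennreal e) sequentially"
    using assms(3) by (intro order_tendstoD(2)) auto
  then obtain n where n: "emeasure (LS_measure f) (A n) < ennreal e" by (auto dest: eventually_happens)
  have le: "x - 1/Suc n \<le> x" by simp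
  have "ext f x - ext f (x - 1/Suc n) < e"
    using n unfolding A_def LS_Ioc[OF assms(1) le]
    by (subst (asm) ennreal_less_iff) (use ext_mono[OF assms(1) le] in auto)
  then show ?thesis by (intro exI[of _ "x - 1/Suc n"]) auto
qed

lemma atom_ge:
  assumes g: "nondecr g" and h: "nondecr h" and x: "0 \<le> x"
    and m: "emeasure (LS_measure g) {x} = 0"
    and hyp: "\<forall>z<x. \<exists>z'. z \<le> z' \<and> z' < x \<and> ext g z' \<le> ext h z'"
  shows "g x \<le> h x"
proof (rule ccontr)
  assume "\<not> g x \<le> h x"
  then have e: "g x - h x > 0" by simp
  obtain z where z: "z < x" "ext g x - ext g z < g x - h x" using LS_atom[OF g m e] by blast
  obtain z' where z': "z \<le> z'" "z' < x" "ext g z' \<le> ext h z'" using hyp z(1) by blast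
  have "ext g z \<le> ext g z'" by (rule ext_mono[OF g z'(1)])
  moreover have "ext h z' \<le> ext h x" by (rule ext_mono[OF h]) (use z' in auto)
  ultimately show False using z z' x by (simp add: ext_def split: if_splits)
qed

lemma one_sided:
  assumes g: "nondecr g" and h: "nondecr h" and a: "0 \<le> a"
    and I: "LS_indicator_integral g P = 0"
    and start: "\<forall>v. 0 \<le> v \<and> v \<le> a \<longrightarrow> g v \<le> h v"
    and Q: "\<forall>v. a < v \<and> v < b \<and> h v < g v \<longrightarrow> P v"
  shows "\<forall>v. 0 \<le> v \<and> v < b \<longrightarrow> g v \<le> h v"
proof (intro allI impI, rule ccontr)
  fix u assume u: "0 \<le> u \<and> u < b" and neg: "\<not> g u \<le> h u"
  have ua: "a < u" using start u neg by force
  define W where "W = {v. a \<le> v \<and> v \<le> u \<and> (\<forall>z. v \<le> z \<and> z \<le> u \<longrightarrow> h z < g z)}"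
  define w where "w = Inf W"
  have uW: "u \<in> W" using ua neg by (auto simp: W_def)
  have bdd: "bdd_below W" by (auto simp: W_def bdd_below_def)
  have wle: "w \<le> u" unfolding w_def by (rule cInf_lower[OF uW bdd])
  have wa: "a \<le> w" unfolding w_def by (rule cInf_greatest) (use uW in \<open>auto simp: W_def\<close>)
  have right: "h z < g z" if "w < z" "z \<le> u" for z
  proof -
    have "Inf W < z" using that unfolding w_def by simp
    then have "\<exists>v\<in>W. v < z" using cInf_less_iff[OF _ bdd] uW by auto
    then obtain v where "v \<in> W" "v < z" by blast
    then show ?thesis using that by (auto simp: W_def)
  qed
  show False
  proof (cases "g w \<le> h w")
    case True
    have "g u \<le> g w"
      by (rule LS_const[OF g _ wle I]) (use wa a right Q u in \<open>auto\<close>)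
    moreover have "h w \<le> h u" using h wle wa a unfolding nondecr_def by auto
    ultimately show False using True neg by linarith
  next
    case False
    have wa': "a < w" using False start wa a by force
    have "emeasure (LS_measure g) {w} = 0"
      by (rule LS_zero[OF I]) (use False Q wa' wle u a in auto)
    moreover have "\<forall>z<w. \<exists>z'. z \<le> z' \<and> z' < w \<and> ext g z' \<le> ext h z'"
    proof (intro allI impI)
      fix z assume zw: "z < w"
      show "\<exists>z'. z \<le> z' \<and> z' < w \<and> ext g z' \<le> ext h z'"
      proof (cases "z \<le> a")
        case True
        then show ?thesis using start a wa' by (intro exI[of _ a]) (auto simp: ext_def)
      next
        case False
        have "z \<notin> W"
        proof
          assume "z \<in> W" then have "w \<le> z" unfolding w_def by (rule cInf_lower[OF _ bdd])
          with zw show False by simp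
        qed
        then obtain z' where z': "z \<le> z'" "z' \<le> u" "\<not> h z' < g z'"
          using False zw wle by (auto simp: W_def)
        have "z' < w"
        proof (rule ccontr)
          assume "\<not> z' < w"
          then have "w = z' \<or> w < z'" by auto
          then show False using False z' right[of z'] \<open>\<not> g w \<le> h w\<close> by auto
        qed
        then show ?thesis using z' False a by (intro exI[of _ z']) (auto simp: ext_def)
      qed
    qed
    ultimately have "g w \<le> h w" by (intro atom_ge[OF g h]) (use wa a in auto)
    with False show False by simp
  qed
qed

lemma rc_less:
  fixes f :: "real \<Rightarrow> real" and R :: "real \<Rightarrow> ereal"
  assumes "cadlag f" "cadlag R" "0 \<le> t" "ereal (f t) < R t"
  shows "\<exists>e>0. \<forall>v. t \<le> v \<and> v < t + e \<longrightarrow> ereal (f v) < R v"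
proof -
  obtain c where c: "ereal (f t) < ereal c" "ereal c < R t" using ereal_dense2[OF assms(4)] by blast
  have f: "(f \<longlongrightarrow> f t) (at_right t)" and R: "(R \<longlongrightarrow> R t) (at_right t)"
    using assms unfolding cadlag_def by auto
  have "eventually (\<lambda>v. f v < c) (at_right t)" using c(1) by (intro order_tendstoD(2)[OF f]) auto
  moreover have "eventually (\<lambda>v. ereal c < R v) (at_right t)" by (intro order_tendstoD(1)[OF R c(2)])
  ultimately have "eventually (\<lambda>v. ereal (f v) < R v) (at_right t)"
  proof eventually_elim
    case (elim v) then show ?case using less_trans[of "ereal (f v)" "ereal c" "R v"] by simp
  qed
  then obtain b where b: "b > t" "\<forall>y>t. y < b \<longrightarrow> ereal (f y) < R y"
    unfolding eventually_at_right_field by blast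
  show ?thesis
  proof (intro exI[of _ "b - t"] conjI allI impI)
    fix v assume "t \<le> v \<and> v < t + (b - t)"
    then have "v = t \<or> (t < v \<and> v < b)" by auto
    then show "ereal (f v) < R v"
    proof
      assume "v = t" then show ?thesis using assms(4) by simp
    next
      assume "t < v \<and> v < b" then show ?thesis using b(2) by simp
    qed
  qed (use b in simp)
qed

lemma rc_greater:
  fixes f :: "real \<Rightarrow> real" and L :: "real \<Rightarrow> ereal"
  assumes "cadlag f" "cadlag L" "0 \<le> t" "L t < ereal (f t)"
  shows "\<exists>e>0. \<forall>v. t \<le> v \<and> v < t + e \<longrightarrow> L v < ereal (f v)"
proof -
  obtain c where c: "L t < ereal c" "ereal c < ereal (f t)" using ereal_dense2[OF assms(4)] by blast
  have f: "(f \<longlongrightarrow> f t) (at_right t)" and L: "(L \<longlongrightarrow> L t) (at_right t)"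
    using assms unfolding cadlag_def by auto
  have "eventually (\<lambda>v. c < f v) (at_right t)" using c(2) by (intro order_tendstoD(1)[OF f]) auto
  moreover have "eventually (\<lambda>v. L v < ereal c) (at_right t)" by (intro order_tendstoD(2)[OF L c(1)])
  ultimately have "eventually (\<lambda>v. L v < ereal (f v)) (at_right t)"
  proof eventually_elim
    case (elim v) then show ?case using less_trans[of "L v" "ereal c" "ereal (f v)"] by simp
  qed
  then obtain b where b: "b > t" "\<forall>y>t. y < b \<longrightarrow> L y < ereal (f y)"
    unfolding eventually_at_right_field by blast
  show ?thesis
  proof (intro exI[of _ "b - t"] conjI allI impI)
    fix v assume "t \<le> v \<and> v < t + (b - t)"
    then have "v = t \<or> (t < v \<and> v < b)" by auto
    then show "L v < ereal (f v)"
    proof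
      assume "v = t" then show ?thesis using assms(4) by simp
    next
      assume "t < v \<and> v < b" then show ?thesis using b(2) by simp
    qed
  qed (use b in simp)
qed

theorem corollary3p2:
  fixes l lt r rt :: "real \<Rightarrow> ereal" and \<psi> \<eta>l \<eta>r \<eta>lt \<eta>rt :: "real \<Rightarrow> real"
  assumes "cadlag_minus l" and "cadlag_minus lt"
    and "cadlag_plus r" and "cadlag_plus rt"
    and "\<forall>t\<ge>0. lt t \<le> l t"
    and "\<forall>t\<ge>0. r t = rt t"
    and "(INF t\<in>{0..}. r t - l t) > 0"
    and "cadlag \<psi>"
    and "constraining_pair \<psi> l r \<eta>l \<eta>r"
    and "constraining_pair \<psi> lt rt \<eta>lt \<eta>rt"
  shows "\<forall>t\<ge>0. \<eta>r t \<ge> \<eta>rt t \<and> \<eta>l t \<ge> \<eta>lt t"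
proof -
  obtain \<phi> \<eta> where \<phi>c: "cadlag \<phi>" and
      \<phi>: "\<forall>t\<ge>0. \<phi> t = \<psi> t + \<eta> t \<and> l t \<le> ereal (\<phi> t) \<and> ereal (\<phi> t) \<le> r t"
      and ndl: "nondecr \<eta>l" and ndr: "nondecr \<eta>r" and \<eta>: "\<forall>t\<ge>0. \<eta> t = \<eta>l t - \<eta>r t"
      and Il: "LS_indicator_integral \<eta>l (\<lambda>s. ereal (\<phi> s) > l s) = 0"
      and Ir: "LS_indicator_integral \<eta>r (\<lambda>s. ereal (\<phi> s) < r s) = 0"
    using assms(9) unfolding constraining_pair_def by blast
  obtain \<phi>t \<eta>t where \<phi>tc: "cadlag \<phi>t" and
      \<phi>t: "\<forall>t\<ge>0. \<phi>t t = \<psi> t + \<eta>t t \<and> lt t \<le> ereal (\<phi>t t) \<and> ereal (\<phi>t t) \<le> rt t"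
      and ndlt: "nondecr \<eta>lt" and ndrt: "nondecr \<eta>rt" and \<eta>t: "\<forall>t\<ge>0. \<eta>t t = \<eta>lt t - \<eta>rt t"
      and Ilt: "LS_indicator_integral \<eta>lt (\<lambda>s. ereal (\<phi>t s) > lt s) = 0"
      and Irt: "LS_indicator_integral \<eta>rt (\<lambda>s. ereal (\<phi>t s) < rt s) = 0"
    using assms(10) unfolding constraining_pair_def by blast
  have rc: "cadlag r" "cadlag lt" using assms(3,2) unfolding cadlag_plus_def cadlag_minus_def by auto
  define Dl where "Dl t = \<eta>l t - \<eta>lt t" for t
  define Dr where "Dr t = \<eta>r t - \<eta>rt t" for t
  have K1: "\<phi> t - \<phi>t t = Dl t - Dr t" if "0 \<le> t" for t
    using \<phi> \<phi>t \<eta> \<eta>t that by (simp add: Dl_def Dr_def)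
  have K2: "Dl t \<le> Dr t" if "0 \<le> t" "\<not> ereal (\<phi>t t) < r t" for t
  proof -
    have "ereal (\<phi>t t) \<le> r t" using \<phi>t assms(6) that(1) by auto
    then have "ereal (\<phi>t t) = r t" using that(2) by auto
    moreover have "ereal (\<phi> t) \<le> r t" using \<phi> that(1) by auto
    ultimately have "ereal (\<phi> t) \<le> ereal (\<phi>t t)" by simp
    then show ?thesis using K1[OF that(1)] by simp
  qed
  have K3: "Dr t \<le> Dl t" if "0 \<le> t" "\<not> lt t < ereal (\<phi>t t)" for t
  proof -
    have "ereal (\<phi>t t) \<le> ereal (\<phi> t)"
      using that \<phi>[rule_format, of t] assms(5)[rule_format, of t] by (meson not_less order_trans)
    then show ?thesis using K1[OF that(1)] by simp
  qed
  have K4: "ereal (\<phi>t t) < r t \<or> lt t < ereal (\<phi>t t)" if "0 \<le> t" for t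
  proof (rule ccontr)
    assume "\<not> ?thesis"
    then have e1: "ereal (\<phi>t t) = r t" and e2: "lt t = ereal (\<phi>t t)"
      using \<phi>t[rule_format, OF that] assms(6)[rule_format, OF that] by auto
    have "l t \<le> ereal (\<phi> t)" "ereal (\<phi> t) \<le> r t" using \<phi> that by auto
    moreover have "lt t \<le> l t" using assms(5) that by auto
    ultimately have "l t = ereal (\<phi>t t)" using e1 e2 by auto
    then have "r t - l t = ereal (\<phi>t t) - ereal (\<phi>t t)" using e1 by simp
    then have "r t - l t = 0" by (simp add: zero_ereal_def)
    moreover have "(INF t\<in>{0..}. r t - l t) \<le> r t - l t" using that by (intro INF_lower) auto
    ultimately show False using assms(7) by simp
  qed
  have Irt': "LS_indicator_integral \<eta>rt (\<lambda>s. ereal (\<phi>t s) < r s) = 0"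
  proof -
    have "{s. 0 \<le> s \<and> ereal (\<phi>t s) < r s} = {s. 0 \<le> s \<and> ereal (\<phi>t s) < rt s}"
      using assms(6) by auto
    then show ?thesis using Irt unfolding LS_indicator_integral_def by simp
  qed
  show ?thesis
  proof (rule ccontr)
    assume neg: "\<not> (\<forall>t\<ge>0. \<eta>r t \<ge> \<eta>rt t \<and> \<eta>l t \<ge> \<eta>lt t)"
    define S where "S = {t. 0 \<le> t \<and> (Dl t < 0 \<or> Dr t < 0)}"
    have Sne: "S \<noteq> {}" using neg by (auto simp: S_def Dl_def Dr_def)
    have bdd: "bdd_below S" by (auto simp: S_def bdd_below_def)
    define \<tau> where "\<tau> = Inf S"
    have \<tau>0: "0 \<le> \<tau>" unfolding \<tau>_def by (rule cInf_greatest[OF Sne]) (auto simp: S_def)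
    have a: "0 \<le> Dl z \<and> 0 \<le> Dr z" if "0 \<le> z" "z < \<tau>" for z
    proof (rule ccontr)
      assume "\<not> ?thesis" then have "z \<in> S" using that by (auto simp: S_def)
      then have "\<tau> \<le> z" unfolding \<tau>_def by (rule cInf_lower[OF _ bdd])
      with that show False by simp
    qed
    have hypl: "\<forall>z<\<tau>. \<exists>z'. z \<le> z' \<and> z' < \<tau> \<and> ext \<eta>lt z' \<le> ext \<eta>l z'"
    proof (intro allI impI)
      fix z assume "z < \<tau>" then show "\<exists>z'. z \<le> z' \<and> z' < \<tau> \<and> ext \<eta>lt z' \<le> ext \<eta>l z'"
        using a[of z] by (intro exI[of _ z]) (auto simp: ext_def Dl_def)
    qed
    have hypr: "\<forall>z<\<tau>. \<exists>z'. z \<le> z' \<and> z' < \<tau> \<and> ext \<eta>rt z' \<le> ext \<eta>r z'"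
    proof (intro allI impI)
      fix z assume "z < \<tau>" then show "\<exists>z'. z \<le> z' \<and> z' < \<tau> \<and> ext \<eta>rt z' \<le> ext \<eta>r z'"
        using a[of z] by (intro exI[of _ z]) (auto simp: ext_def Dr_def)
    qed
    have rfine: "0 \<le> Dr \<tau>" if "ereal (\<phi>t \<tau>) < r \<tau>"
    proof -
      have "emeasure (LS_measure \<eta>rt) {\<tau>} = 0"
        by (rule LS_zero[OF Irt']) (use that \<tau>0 in auto)
      then show ?thesis using atom_ge[OF ndrt ndr \<tau>0 _ hypr] by (simp add: Dr_def)
    qed
    have lfine: "0 \<le> Dl \<tau>" if "lt \<tau> < ereal (\<phi>t \<tau>)"
    proof -
      have "emeasure (LS_measure \<eta>lt) {\<tau>} = 0"
        by (rule LS_zero[OF Ilt]) (use that \<tau>0 in auto)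
      then show ?thesis using atom_ge[OF ndlt ndl \<tau>0 _ hypl] by (simp add: Dl_def)
    qed
    have b: "0 \<le> Dl \<tau> \<and> 0 \<le> Dr \<tau>"
      using K4[OF \<tau>0] rfine lfine K2[OF \<tau>0] K3[OF \<tau>0] by (meson order_trans)
    have c: "\<exists>e>0. \<forall>v. \<tau> \<le> v \<and> v < \<tau> + e \<longrightarrow> 0 \<le> Dl v \<and> 0 \<le> Dr v"
      using K4[OF \<tau>0]
    proof
      assume "ereal (\<phi>t \<tau>) < r \<tau>"
      then obtain e where e: "e > 0" "\<forall>v. \<tau> \<le> v \<and> v < \<tau> + e \<longrightarrow> ereal (\<phi>t v) < r v"
        using rc_less[OF \<phi>tc rc(1) \<tau>0] by blast
      have R: "0 \<le> Dr v" if "\<tau> \<le> v" "v < \<tau> + e" for v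
      proof -
        have "\<eta>rt v \<le> \<eta>rt \<tau>"
          by (rule LS_const[OF ndrt \<tau>0 that(1) Irt']) (use e that in auto)
        moreover have "\<eta>r \<tau> \<le> \<eta>r v" using ndr that \<tau>0 unfolding nondecr_def by auto
        ultimately show ?thesis using b by (simp add: Dr_def)
      qed
      have L: "\<forall>v. 0 \<le> v \<and> v < \<tau> + e \<longrightarrow> \<eta>lt v \<le> \<eta>l v"
      proof (rule one_sided[OF ndlt ndl \<tau>0 Ilt])
        show "\<forall>v. 0 \<le> v \<and> v \<le> \<tau> \<longrightarrow> \<eta>lt v \<le> \<eta>l v"
        proof (intro allI impI)
          fix v assume v: "0 \<le> v \<and> v \<le> \<tau>"
          then have "v < \<tau> \<or> v = \<tau>" by auto
          then show "\<eta>lt v \<le> \<eta>l v" using a[of v] b v by (auto simp: Dl_def)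
        qed
        show "\<forall>v. \<tau> < v \<and> v < \<tau> + e \<and> \<eta>l v < \<eta>lt v \<longrightarrow> lt v < ereal (\<phi>t v)"
        proof (intro allI impI)
          fix v assume v: "\<tau> < v \<and> v < \<tau> + e \<and> \<eta>l v < \<eta>lt v"
          then have v0: "0 \<le> v" using \<tau>0 by auto
          have "\<phi> v < \<phi>t v" using K1[OF v0] R[of v] v by (simp add: Dl_def)
          moreover have "lt v \<le> ereal (\<phi> v)" using \<phi> assms(5) v0 by (meson order_trans)
          ultimately show "lt v < ereal (\<phi>t v)" using le_less_trans[of "lt v" "ereal (\<phi> v)" "ereal (\<phi>t v)"] by simp
        qed
      qed
      show ?thesis using e R L \<tau>0 by (intro exI[of _ e]) (auto simp: Dl_def)
    next
      assume "lt \<tau> < ereal (\<phi>t \<tau>)"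
      then obtain e where e: "e > 0" "\<forall>v. \<tau> \<le> v \<and> v < \<tau> + e \<longrightarrow> lt v < ereal (\<phi>t v)"
        using rc_greater[OF \<phi>tc rc(2) \<tau>0] by blast
      have L: "0 \<le> Dl v" if "\<tau> \<le> v" "v < \<tau> + e" for v
      proof -
        have "\<eta>lt v \<le> \<eta>lt \<tau>"
          by (rule LS_const[OF ndlt \<tau>0 that(1) Ilt]) (use e that in auto)
        moreover have "\<eta>l \<tau> \<le> \<eta>l v" using ndl that \<tau>0 unfolding nondecr_def by auto
        ultimately show ?thesis using b by (simp add: Dl_def)
      qed
      have R: "\<forall>v. 0 \<le> v \<and> v < \<tau> + e \<longrightarrow> \<eta>rt v \<le> \<eta>r v"
      proof (rule one_sided[OF ndrt ndr \<tau>0 Irt'])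
        show "\<forall>v. 0 \<le> v \<and> v \<le> \<tau> \<longrightarrow> \<eta>rt v \<le> \<eta>r v"
        proof (intro allI impI)
          fix v assume v: "0 \<le> v \<and> v \<le> \<tau>"
          then have "v < \<tau> \<or> v = \<tau>" by auto
          then show "\<eta>rt v \<le> \<eta>r v" using a[of v] b v by (auto simp: Dr_def)
        qed
        show "\<forall>v. \<tau> < v \<and> v < \<tau> + e \<and> \<eta>r v < \<eta>rt v \<longrightarrow> ereal (\<phi>t v) < r v"
        proof (intro allI impI)
          fix v assume v: "\<tau> < v \<and> v < \<tau> + e \<and> \<eta>r v < \<eta>rt v"
          then have v0: "0 \<le> v" using \<tau>0 by auto
          have "\<phi>t v < \<phi> v" using K1[OF v0] L[of v] v by (simp add: Dr_def)
          moreover have "ereal (\<phi> v) \<le> r v" using \<phi> v0 by auto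
          ultimately show "ereal (\<phi>t v) < r v" using less_le_trans[of "ereal (\<phi>t v)" "ereal (\<phi> v)" "r v"] by simp
        qed
      qed
      show ?thesis using e R L \<tau>0 by (intro exI[of _ e]) (auto simp: Dr_def)
    qed
    then obtain e where e: "e > 0" "\<forall>v. \<tau> \<le> v \<and> v < \<tau> + e \<longrightarrow> 0 \<le> Dl v \<and> 0 \<le> Dr v" by blast
    have "\<tau> + e \<le> Inf S"
    proof (rule cInf_greatest[OF Sne])
      fix s assume s: "s \<in> S"
      have "\<tau> \<le> s" unfolding \<tau>_def by (rule cInf_lower[OF s bdd])
      then show "\<tau> + e \<le> s" using s e by (force simp: S_def)
    qed
    then show False using e unfolding \<tau>_def by simp
  qed
qed

end
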